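(* Let $\mathbb D$ be a skew field, $\sigma$ an automorphism of $\mathbb D$, $\delta$ a $\sigma$-derivation, and $R=\mathbb D[x;\sigma,\delta]$. If $f\in R$ is a bounded polynomial of positive degree, then $f$ is irreducible if and only if $\operatorname{End}_R(R/Rf)$ is a skew field.
   Context: $\mathbb D[x;\sigma,\delta]$ is the ring which is a free left $\mathbb D$-module with basis $\{x^n:n\ge0\}$ with $x^nx^m=x^{n+m}$ and $xa=\sigma(a)x+\delta(a)$, where $\delta$ is additive with $\delta(ab)=\sigma(a)\delta(b)+\delta(a)b$. A polynomial $f$ of positive degree is irreducible if $f=ab$ implies $a\in\mathbb D$ or $b\in\mathbb D$. $f$ is bounded if the annihilator $\{r\in R: r(R/Rf)=0\}$ of the left module $R/Rf$ is nonzero. *)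

theory Defs
  imports "HOL-Algebra.Subrings"
begin

definition skew_subfield :: "('a, 'b) ring_scheme \<Rightarrow> 'a set \<Rightarrow> bool" where
  "skew_subfield R D \<longleftrightarrow> subring D R \<and> \<one>\<^bsub>R\<^esub> \<noteq> \<zero>\<^bsub>R\<^esub> \<and>
     (\<forall>a\<in>D - {\<zero>\<^bsub>R\<^esub>}. \<exists>b\<in>D. a \<otimes>\<^bsub>R\<^esub> b = \<one>\<^bsub>R\<^esub> \<and> b \<otimes>\<^bsub>R\<^esub> a = \<one>\<^bsub>R\<^esub>)"

definition is_automorphism :: "('a, 'b) ring_scheme \<Rightarrow> 'a set \<Rightarrow> ('a \<Rightarrow> 'a) \<Rightarrow> bool" where
  "is_automorphism R D \<sigma> \<longleftrightarrow> bij_betw \<sigma> D D \<and> \<sigma> \<one>\<^bsub>R\<^esub> = \<one>\<^bsub>R\<^esub> \<and>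
     (\<forall>a\<in>D. \<forall>b\<in>D. \<sigma> (a \<oplus>\<^bsub>R\<^esub> b) = \<sigma> a \<oplus>\<^bsub>R\<^esub> \<sigma> b \<and>
                      \<sigma> (a \<otimes>\<^bsub>R\<^esub> b) = \<sigma> a \<otimes>\<^bsub>R\<^esub> \<sigma> b)"

definition is_sigma_derivation :: "('a, 'b) ring_scheme \<Rightarrow> 'a set \<Rightarrow> ('a \<Rightarrow> 'a) \<Rightarrow> ('a \<Rightarrow> 'a) \<Rightarrow> bool" where
  "is_sigma_derivation R D \<sigma> \<delta> \<longleftrightarrow> \<delta> ` D \<subseteq> D \<and>
     (\<forall>a\<in>D. \<forall>b\<in>D. \<delta> (a \<oplus>\<^bsub>R\<^esub> b) = \<delta> a \<oplus>\<^bsub>R\<^esub> \<delta> b \<and>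
        \<delta> (a \<otimes>\<^bsub>R\<^esub> b) = (\<sigma> a \<otimes>\<^bsub>R\<^esub> \<delta> b) \<oplus>\<^bsub>R\<^esub> (\<delta> a \<otimes>\<^bsub>R\<^esub> b))"

definition coeff_rep :: "('a, 'b) ring_scheme \<Rightarrow> 'a set \<Rightarrow> 'a \<Rightarrow> (nat \<Rightarrow> 'a) \<Rightarrow> 'a \<Rightarrow> bool" where
  "coeff_rep R D x c r \<longleftrightarrow> (\<forall>n. c n \<in> D) \<and>
     (\<exists>N. (\<forall>n>N. c n = \<zero>\<^bsub>R\<^esub>) \<and> r = (\<Oplus>\<^bsub>R\<^esub>i\<in>{..N}. c i \<otimes>\<^bsub>R\<^esub> (x [^]\<^bsub>R\<^esub> i)))"

text \<open>R is (an isomorphic copy of) the Ore extension D[x;sigma,delta]: R is a ring containing the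
  skew field D and x, R is a free left D-module with basis x^n (n >= 0), and x a = sigma(a) x + delta(a).\<close>
definition is_ore_extension ::
  "('a, 'b) ring_scheme \<Rightarrow> 'a set \<Rightarrow> ('a \<Rightarrow> 'a) \<Rightarrow> ('a \<Rightarrow> 'a) \<Rightarrow> 'a \<Rightarrow> bool" where
  "is_ore_extension R D \<sigma> \<delta> x \<longleftrightarrow> ring R \<and> skew_subfield R D \<and> x \<in> carrier R \<and>
     (\<forall>r\<in>carrier R. \<exists>!c. coeff_rep R D x c r) \<and>
     (\<forall>a\<in>D. x \<otimes>\<^bsub>R\<^esub> a = (\<sigma> a \<otimes>\<^bsub>R\<^esub> x) \<oplus>\<^bsub>R\<^esub> \<delta> a)"

definition ore_coeff :: "('a, 'b) ring_scheme \<Rightarrow> 'a set \<Rightarrow> 'a \<Rightarrow> 'a \<Rightarrow> nat \<Rightarrow> 'a" where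
  "ore_coeff R D x r = (THE c. coeff_rep R D x c r)"

definition ore_degree :: "('a, 'b) ring_scheme \<Rightarrow> 'a set \<Rightarrow> 'a \<Rightarrow> 'a \<Rightarrow> nat" where
  "ore_degree R D x r = (if r = \<zero>\<^bsub>R\<^esub> then 0 else GREATEST n. ore_coeff R D x r n \<noteq> \<zero>\<^bsub>R\<^esub>)"

definition ore_irreducible :: "('a, 'b) ring_scheme \<Rightarrow> 'a set \<Rightarrow> 'a \<Rightarrow> bool" where
  "ore_irreducible R D f \<longleftrightarrow>
     (\<forall>a\<in>carrier R. \<forall>b\<in>carrier R. f = a \<otimes>\<^bsub>R\<^esub> b \<longrightarrow> a \<in> D \<or> b \<in> D)"

definition lcoset :: "('a, 'b) ring_scheme \<Rightarrow> 'a \<Rightarrow> 'a \<Rightarrow> 'a set" where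
  "lcoset R f r = {r \<oplus>\<^bsub>R\<^esub> (s \<otimes>\<^bsub>R\<^esub> f) | s. s \<in> carrier R}"

definition quot_mod :: "('a, 'b) ring_scheme \<Rightarrow> 'a \<Rightarrow> 'a set set" where
  "quot_mod R f = lcoset R f ` carrier R"

definition annihilator :: "('a, 'b) ring_scheme \<Rightarrow> 'a \<Rightarrow> 'a set" where
  "annihilator R f = {r \<in> carrier R. \<forall>s\<in>carrier R. \<exists>t\<in>carrier R. r \<otimes>\<^bsub>R\<^esub> s = t \<otimes>\<^bsub>R\<^esub> f}"

definition bounded :: "('a, 'b) ring_scheme \<Rightarrow> 'a \<Rightarrow> bool" where
  "bounded R f \<longleftrightarrow> annihilator R f \<noteq> {\<zero>\<^bsub>R\<^esub>}"

definition module_endos :: "('a, 'b) ring_scheme \<Rightarrow> 'a \<Rightarrow> ('a set \<Rightarrow> 'a set) set" where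
  "module_endos R f = {\<phi>. \<phi> \<in> extensional (quot_mod R f) \<and> \<phi> \<in> quot_mod R f \<rightarrow> quot_mod R f \<and>
      (\<forall>a\<in>carrier R. \<forall>r\<in>carrier R. \<forall>r'\<in>carrier R. \<forall>s\<in>carrier R. \<forall>s'\<in>carrier R.
         \<phi> (lcoset R f r) = lcoset R f s \<longrightarrow> \<phi> (lcoset R f r') = lcoset R f s' \<longrightarrow>
         \<phi> (lcoset R f ((a \<otimes>\<^bsub>R\<^esub> r) \<oplus>\<^bsub>R\<^esub> r')) = lcoset R f ((a \<otimes>\<^bsub>R\<^esub> s) \<oplus>\<^bsub>R\<^esub> s'))}"

definition End_ring :: "('a, 'b) ring_scheme \<Rightarrow> 'a \<Rightarrow> ('a set \<Rightarrow> 'a set) ring" where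
  "End_ring R f = \<lparr> carrier = module_endos R f,
      mult = (\<lambda>\<phi> \<psi>. restrict (\<phi> \<circ> \<psi>) (quot_mod R f)),
      one = restrict (\<lambda>A. A) (quot_mod R f),
      zero = restrict (\<lambda>A. lcoset R f \<zero>\<^bsub>R\<^esub>) (quot_mod R f),
      add = (\<lambda>\<phi> \<psi>. restrict (\<lambda>A. {u \<oplus>\<^bsub>R\<^esub> v | u v. u \<in> \<phi> A \<and> v \<in> \<psi> A}) (quot_mod R f)) \<rparr>"

definition skew_field :: "('c, 'd) ring_scheme \<Rightarrow> bool" where
  "skew_field E \<longleftrightarrow> ring E \<and> \<one>\<^bsub>E\<^esub> \<noteq> \<zero>\<^bsub>E\<^esub> \<and> carrier E - {\<zero>\<^bsub>E\<^esub>} \<subseteq> Units E"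

end

theory Submission
  imports Defs
begin

declare nat_pow_Suc[simp del]

locale ore = ring R for R (structure) +
  fixes D :: "'a set" and \<sigma> \<delta> :: "'a \<Rightarrow> 'a" and x :: 'a
  assumes sf: "skew_subfield R D" and xc: "x \<in> carrier R"
  and uniq: "\<forall>r\<in>carrier R. \<exists>!c. coeff_rep R D x c r"
  and xa: "\<forall>a\<in>D. x \<otimes> a = (\<sigma> a \<otimes> x) \<oplus> \<delta> a"
  and aut: "is_automorphism R D \<sigma>" and der: "is_sigma_derivation R D \<sigma> \<delta>"
begin

declare nat_pow_Suc[simp del]

lemma subD: "subring D R" using sf unfolding skew_subfield_def by auto
lemma Dc: "a \<in> D \<Longrightarrow> a \<in> carrier R" using subringE(1)[OF subD] by auto
lemma D0[simp]: "\<zero> \<in> D" using subringE(2)[OF subD] by auto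
lemma D1[simp]: "\<one> \<in> D" using subringE(3)[OF subD] by auto
lemma Dneg: "a \<in> D \<Longrightarrow> \<ominus> a \<in> D" using subringE(5)[OF subD] by auto
lemma Dmult: "a \<in> D \<Longrightarrow> b \<in> D \<Longrightarrow> a \<otimes> b \<in> D" using subringE(6)[OF subD] by auto
lemma Dadd: "a \<in> D \<Longrightarrow> b \<in> D \<Longrightarrow> a \<oplus> b \<in> D" using subringE(7)[OF subD] by auto
lemma one_neq_zero: "\<one> \<noteq> \<zero>" using sf unfolding skew_subfield_def by auto
lemma Dinv: "a \<in> D \<Longrightarrow> a \<noteq> \<zero> \<Longrightarrow> \<exists>b\<in>D. a \<otimes> b = \<one> \<and> b \<otimes> a = \<one>"
  using sf unfolding skew_subfield_def by auto

lemma xpS: "x [^] Suc n = x [^] n \<otimes> x" by (rule nat_pow_Suc)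
lemma xpS2: "x [^] Suc n = x \<otimes> x [^] n" by (rule nat_pow_Suc2[OF xc])

lemma xcomm: "x [^] (n::nat) \<otimes> x = x \<otimes> x [^] n" using xpS[of n] xpS2[of n] by simp
lemma xcomm2: "y \<in> carrier R \<Longrightarrow> x [^] (n::nat) \<otimes> (x \<otimes> y) = x \<otimes> (x [^] n \<otimes> y)"
proof -
  assume y: "y \<in> carrier R"
  have "x [^] n \<otimes> (x \<otimes> y) = (x [^] n \<otimes> x) \<otimes> y" using y xc by (simp add: m_assoc)
  also have "\<dots> = (x \<otimes> x [^] n) \<otimes> y" by (simp only: xcomm)
  finally show ?thesis using y xc by (simp add: m_assoc)
qed

lemma sD: "a \<in> D \<Longrightarrow> \<sigma> a \<in> D" using aut unfolding is_automorphism_def bij_betw_def by auto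
lemma dD: "a \<in> D \<Longrightarrow> \<delta> a \<in> D" using der unfolding is_sigma_derivation_def by auto
lemma s_add: "a \<in> D \<Longrightarrow> b \<in> D \<Longrightarrow> \<sigma> (a \<oplus> b) = \<sigma> a \<oplus> \<sigma> b"
  using aut unfolding is_automorphism_def by auto
lemma self_add_zero: "a \<in> carrier R \<Longrightarrow> a = a \<oplus> a \<Longrightarrow> a = \<zero>"
proof -
  assume a: "a \<in> carrier R" "a = a \<oplus> a"
  have "\<zero> = a \<ominus> a" using a by (simp add: r_neg minus_eq)
  also have "\<dots> = (a \<oplus> a) \<ominus> a" using a by simp
  also have "\<dots> = a" using a by (simp add: minus_eq a_assoc r_neg)
  finally show ?thesis by simp
qed

lemma s0: "\<sigma> \<zero> = \<zero>"
proof -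
  have "\<sigma> \<zero> = \<sigma> \<zero> \<oplus> \<sigma> \<zero>" using s_add[OF D0 D0] by simp
  moreover have sc: "\<sigma> \<zero> \<in> carrier R" using sD[of \<zero>] Dc by simp
  ultimately show ?thesis using self_add_zero by blast
qed
lemma s_inj: "inj_on \<sigma> D" using aut unfolding is_automorphism_def bij_betw_def by auto
lemma s_surj: "\<sigma> ` D = D" using aut unfolding is_automorphism_def bij_betw_def by auto

lemma skD: "a \<in> D \<Longrightarrow> (\<sigma> ^^ k) a \<in> D" by (induct k) (auto simp: sD)
lemma sk_nz: "a \<in> D \<Longrightarrow> a \<noteq> \<zero> \<Longrightarrow> (\<sigma> ^^ k) a \<noteq> \<zero>"
proof (induct k)
  case (Suc k)
  hence "(\<sigma> ^^ k) a \<noteq> \<zero>" by auto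
  moreover have "(\<sigma> ^^ k) a \<in> D" using skD Suc by auto
  ultimately show ?case using s_inj s0 unfolding inj_on_def by (metis D0 funpow.simps(2) o_apply)
qed simp
lemma sk_surj: "b \<in> D \<Longrightarrow> \<exists>a\<in>D. (\<sigma> ^^ k) a = b"
proof (induct k arbitrary: b)
  case (Suc k)
  then obtain c where "c \<in> D" "\<sigma> c = b" using s_surj by (metis imageE)
  then obtain a where "a \<in> D" "(\<sigma> ^^ k) a = c" using Suc by auto
  thus ?case using \<open>\<sigma> c = b\<close> by auto
qed auto

lemma D_nz_mult: "a \<in> D \<Longrightarrow> b \<in> D \<Longrightarrow> a \<noteq> \<zero> \<Longrightarrow> b \<noteq> \<zero> \<Longrightarrow> a \<otimes> b \<noteq> \<zero>"
proof
  assume a: "a \<in> D" "b \<in> D" "a \<noteq> \<zero>" "b \<noteq> \<zero>" "a \<otimes> b = \<zero>"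
  then obtain c where c: "c \<in> D" "c \<otimes> a = \<one>" using Dinv by auto
  have cc: "a \<in> carrier R" "b \<in> carrier R" "c \<in> carrier R" using a c Dc by auto
  have "b = (c \<otimes> a) \<otimes> b" using c cc by simp
  also have "\<dots> = c \<otimes> (a \<otimes> b)" using cc m_assoc by simp
  also have "\<dots> = \<zero>" using a cc by simp
  finally show False using a by simp
qed

definition Q :: "nat \<Rightarrow> 'a set" where
  "Q n = rec_nat {\<zero>} (\<lambda>n S. {c \<otimes> x [^] n \<oplus> q | c q. c \<in> D \<and> q \<in> S}) n"

lemma Q_0[simp]: "Q 0 = {\<zero>}" by (simp add: Q_def)
lemma Q_S: "Q (Suc n) = {c \<otimes> x [^] n \<oplus> q | c q. c \<in> D \<and> q \<in> Q n}" by (simp add: Q_def)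

lemma Qc: "r \<in> Q n \<Longrightarrow> r \<in> carrier R"
  by (induct n arbitrary: r) (auto simp: Q_S xc Dc)

lemma QI: "c \<in> D \<Longrightarrow> q \<in> Q n \<Longrightarrow> c \<otimes> x [^] n \<oplus> q \<in> Q (Suc n)" by (auto simp: Q_S)

lemma QE: "r \<in> Q (Suc n) \<Longrightarrow> (\<And>c q. c \<in> D \<Longrightarrow> q \<in> Q n \<Longrightarrow> r = c \<otimes> x [^] n \<oplus> q \<Longrightarrow> P) \<Longrightarrow> P"
  by (auto simp: Q_S)

lemma Q_Suc: "q \<in> Q n \<Longrightarrow> q \<in> Q (Suc n)"
proof -
  assume q: "q \<in> Q n"
  hence "\<zero> \<otimes> x [^] n \<oplus> q \<in> Q (Suc n)" by (intro QI) auto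
  thus ?thesis using q Qc xc by simp
qed

lemma Q0[simp]: "\<zero> \<in> Q n"
proof (induct n)
  case (Suc n) thus ?case using Q_Suc by blast
qed simp

lemma QI0: "c \<in> D \<Longrightarrow> c \<otimes> x [^] n \<in> Q (Suc n)"
  using QI[of c \<zero> n] Dc xc by simp

lemma Q_mono: "n \<le> m \<Longrightarrow> Q n \<subseteq> Q m"
  by (induct m) (auto simp del: Q_S intro: Q_Suc elim: le_SucE)


lemma Q_add: "a \<in> Q n \<Longrightarrow> b \<in> Q n \<Longrightarrow> a \<oplus> b \<in> Q n"
proof (induct n arbitrary: a b)
  case (Suc n)
  from Suc.prems obtain c q c' q' where h: "c \<in> D" "q \<in> Q n" "a = c \<otimes> x [^] n \<oplus> q"
     "c' \<in> D" "q' \<in> Q n" "b = c' \<otimes> x [^] n \<oplus> q'" by (auto elim!: QE)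
  have cc: "c \<in> carrier R" "c' \<in> carrier R" "q \<in> carrier R" "q' \<in> carrier R" "x [^] n \<in> carrier R"
    using h Dc Qc xc by auto
  have "a \<oplus> b = (c \<oplus> c') \<otimes> x [^] n \<oplus> (q \<oplus> q')"
    using cc h by (simp add: l_distr a_ac)
  thus ?case using Suc h by (auto intro!: QI Dadd)
qed simp

lemma Q_neg: "a \<in> Q n \<Longrightarrow> \<ominus> a \<in> Q n"
proof (induct n arbitrary: a)
  case (Suc n)
  from Suc.prems obtain c q where h: "c \<in> D" "q \<in> Q n" "a = c \<otimes> x [^] n \<oplus> q" by (auto elim!: QE)
  have cc: "c \<in> carrier R" "q \<in> carrier R" "x [^] n \<in> carrier R"
    using h Dc Qc xc by auto
  have "\<ominus> a = (\<ominus> c) \<otimes> x [^] n \<oplus> (\<ominus> q)"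
    using cc h by (simp add: l_minus minus_add)
  thus ?case using Suc h by (auto intro!: QI Dneg)
qed simp

lemma Q_minus: "a \<in> Q n \<Longrightarrow> b \<in> Q n \<Longrightarrow> a \<ominus> b \<in> Q n"
  by (simp add: minus_eq Q_add Q_neg)

lemma Q_lmult: "d \<in> D \<Longrightarrow> a \<in> Q n \<Longrightarrow> d \<otimes> a \<in> Q n"
proof (induct n arbitrary: a)
  case 0 thus ?case using Dc by simp
next
  case (Suc n)
  from Suc.prems obtain c q where h: "c \<in> D" "q \<in> Q n" "a = c \<otimes> x [^] n \<oplus> q" by (auto elim!: QE)
  have cc: "c \<in> carrier R" "q \<in> carrier R" "x [^] n \<in> carrier R" "d \<in> carrier R"
    using h Dc Qc xc Suc by auto
  have "d \<otimes> a = (d \<otimes> c) \<otimes> x [^] n \<oplus> (d \<otimes> q)"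
    using cc h by (simp add: r_distr m_assoc)
  thus ?case using Suc h by (auto intro!: QI Dmult)
qed



lemma Q_rx: "a \<in> Q n \<Longrightarrow> a \<otimes> x \<in> Q (Suc n)"
proof (induct n arbitrary: a)
  case 0 thus ?case using xc by simp
next
  case (Suc n)
  from Suc.prems obtain c q where h: "c \<in> D" "q \<in> Q n" "a = c \<otimes> x [^] n \<oplus> q" by (auto elim!: QE)
  have cc: "c \<in> carrier R" "q \<in> carrier R" "x [^] n \<in> carrier R"
    using h Dc Qc xc by auto
  have "a \<otimes> x = c \<otimes> x [^] Suc n \<oplus> (q \<otimes> x)"
    using cc h xc by (simp add: l_distr m_assoc xpS)
  thus ?case using Suc h by (auto intro!: QI simp del: nat_pow_Suc)
qed

lemma Q_rxp: "a \<in> Q n \<Longrightarrow> a \<otimes> x [^] j \<in> Q (n + j)"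
proof (induct j)
  case 0 thus ?case using Qc by simp
next
  case (Suc j)
  have "a \<otimes> x [^] Suc j = (a \<otimes> x [^] j) \<otimes> x" using Suc Qc xc by (simp add: m_assoc xpS)
  thus ?case using Q_rx Suc by simp
qed

lemma Q_lx: "a \<in> Q n \<Longrightarrow> x \<otimes> a \<in> Q (Suc n)"
proof (induct n arbitrary: a)
  case 0 thus ?case using xc by simp
next
  case (Suc n)
  from Suc.prems obtain c q where h: "c \<in> D" "q \<in> Q n" "a = c \<otimes> x [^] n \<oplus> q" by (auto elim!: QE)
  have cc: "c \<in> carrier R" "q \<in> carrier R" "x [^] n \<in> carrier R" "\<sigma> c \<in> carrier R" "\<delta> c \<in> carrier R"
    using h Dc Qc xc sD dD by auto
  have "x \<otimes> a = (x \<otimes> c) \<otimes> x [^] n \<oplus> x \<otimes> q"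
    using cc h xc by (simp add: r_distr m_assoc)
  also have "\<dots> = (\<sigma> c \<otimes> x \<oplus> \<delta> c) \<otimes> x [^] n \<oplus> x \<otimes> q" using xa h by simp
  also have "\<dots> = \<sigma> c \<otimes> x [^] Suc n \<oplus> (\<delta> c \<otimes> x [^] n \<oplus> x \<otimes> q)"
    using cc xc by (simp add: l_distr m_assoc xpS2 a_assoc xcomm xcomm2)
  moreover have "\<delta> c \<otimes> x [^] n \<oplus> x \<otimes> q \<in> Q (Suc n)"
    using Suc h dD by (intro Q_add QI0 Suc.hyps) auto
  ultimately show ?case using QI[OF sD[OF h(1)]] by simp
qed

lemma Q_lxp: "a \<in> Q n \<Longrightarrow> x [^] j \<otimes> a \<in> Q (j + n)"
proof (induct j)
  case 0 thus ?case using Qc by simp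
next
  case (Suc j)
  have "x [^] Suc j \<otimes> a = x \<otimes> (x [^] j \<otimes> a)" using Suc Qc xc by (simp add: xpS2 m_assoc xcomm xcomm2)
  thus ?case using Q_lx Suc by simp
qed

lemma xk_d: "d \<in> D \<Longrightarrow> \<exists>q\<in>Q k. x [^] k \<otimes> d = (\<sigma> ^^ k) d \<otimes> x [^] k \<oplus> q"
proof (induct k)
  case 0 thus ?case using Dc by (auto intro!: bexI[of _ \<zero>])
next
  case (Suc k)
  then obtain q where q: "q \<in> Q k" "x [^] k \<otimes> d = (\<sigma> ^^ k) d \<otimes> x [^] k \<oplus> q" by auto
  let ?e = "(\<sigma> ^^ k) d"
  have e: "?e \<in> D" using skD Suc by auto
  have cc: "?e \<in> carrier R" "q \<in> carrier R" "x [^] k \<in> carrier R" "\<sigma> ?e \<in> carrier R" "\<delta> ?e \<in> carrier R"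
     "d \<in> carrier R"
    using q e Dc Qc xc sD dD Suc by auto
  have "x [^] Suc k \<otimes> d = x \<otimes> (x [^] k \<otimes> d)" using cc xc by (simp add: xpS2 m_assoc xcomm xcomm2)
  also have "\<dots> = (x \<otimes> ?e) \<otimes> x [^] k \<oplus> x \<otimes> q" using q cc xc by (simp add: r_distr m_assoc)
  also have "\<dots> = (\<sigma> ?e \<otimes> x \<oplus> \<delta> ?e) \<otimes> x [^] k \<oplus> x \<otimes> q" using xa e by simp
  also have "\<dots> = (\<sigma> ^^ Suc k) d \<otimes> x [^] Suc k \<oplus> (\<delta> ?e \<otimes> x [^] k \<oplus> x \<otimes> q)"
    using cc xc by (simp add: l_distr m_assoc xpS2 a_assoc xcomm xcomm2)
  moreover have "\<delta> ?e \<otimes> x [^] k \<oplus> x \<otimes> q \<in> Q (Suc k)"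
    using q e dD by (intro Q_add QI0 Q_lx) auto
  ultimately show ?case by auto
qed

end


context ore begin

lemma Q_mult: "a \<in> Q n \<Longrightarrow> b \<in> Q (Suc m) \<Longrightarrow> a \<otimes> b \<in> Q (n + m)"
proof (induct n arbitrary: a)
  case 0 thus ?case using Qc by simp
next
  case (Suc n)
  from Suc.prems obtain c q where h: "c \<in> D" "q \<in> Q n" "a = c \<otimes> x [^] n \<oplus> q" by (auto elim!: QE)
  have cc: "c \<in> carrier R" "q \<in> carrier R" "x [^] n \<in> carrier R" "b \<in> carrier R"
    using h Dc Qc xc Suc by auto
  have "a \<otimes> b = c \<otimes> (x [^] n \<otimes> b) \<oplus> q \<otimes> b" using cc h by (simp add: l_distr m_assoc)
  moreover have "c \<otimes> (x [^] n \<otimes> b) \<in> Q (Suc n + m)"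
    using Q_lmult[OF h(1) Q_lxp[OF Suc.prems(2), of n]] by simp
  moreover have "q \<otimes> b \<in> Q (Suc n + m)" using Suc.hyps[OF h(2) Suc.prems(2)] Q_mono[of "n+m" "Suc n + m"] by auto
  ultimately show ?case by (simp add: Q_add)
qed

lemma lead_mult:
  assumes c: "c \<in> D" and d: "d \<in> D" and q: "q \<in> Q n" and q': "q' \<in> Q m"
  shows "\<exists>r\<in>Q (n+m). (c \<otimes> x [^] n \<oplus> q) \<otimes> (d \<otimes> x [^] m \<oplus> q') = (c \<otimes> (\<sigma> ^^ n) d) \<otimes> x [^] (n+m) \<oplus> r"
proof -
  obtain q1 where q1: "q1 \<in> Q n" "x [^] n \<otimes> d = (\<sigma> ^^ n) d \<otimes> x [^] n \<oplus> q1" using xk_d d by blast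
  let ?s = "(\<sigma> ^^ n) d"
  have cc: "c \<in> carrier R" "d \<in> carrier R" "q \<in> carrier R" "q' \<in> carrier R" "q1 \<in> carrier R"
    "x [^] n \<in> carrier R" "x [^] m \<in> carrier R" "?s \<in> carrier R"
    using c d q q' q1 Dc Qc xc skD by auto
  let ?b = "d \<otimes> x [^] m \<oplus> q'"
  have bc: "?b \<in> carrier R" using cc by simp
  have bQ: "?b \<in> Q (Suc m)" using QI d q' by simp
  have "(c \<otimes> x [^] n \<oplus> q) \<otimes> ?b = c \<otimes> ((x [^] n \<otimes> d) \<otimes> x [^] m) \<oplus> c \<otimes> (x [^] n \<otimes> q') \<oplus> q \<otimes> ?b"
    using cc by (simp add: l_distr r_distr m_assoc a_ac)
  also have "\<dots> = c \<otimes> (?s \<otimes> (x [^] n \<otimes> x [^] m)) \<oplus> (c \<otimes> (q1 \<otimes> x [^] m) \<oplus> c \<otimes> (x [^] n \<otimes> q') \<oplus> q \<otimes> ?b)"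
    using cc q1 by (simp add: l_distr r_distr m_assoc a_assoc)
  also have "\<dots> = (c \<otimes> ?s) \<otimes> x [^] (n+m) \<oplus> (c \<otimes> (q1 \<otimes> x [^] m) \<oplus> c \<otimes> (x [^] n \<otimes> q') \<oplus> q \<otimes> ?b)"
    using cc xc by (simp add: m_assoc nat_pow_mult)
  finally have e: "(c \<otimes> x [^] n \<oplus> q) \<otimes> ?b = (c \<otimes> ?s) \<otimes> x [^] (n+m) \<oplus> (c \<otimes> (q1 \<otimes> x [^] m) \<oplus> c \<otimes> (x [^] n \<otimes> q') \<oplus> q \<otimes> ?b)" .
  have "c \<otimes> (q1 \<otimes> x [^] m) \<oplus> c \<otimes> (x [^] n \<otimes> q') \<oplus> q \<otimes> ?b \<in> Q (n+m)"
    using Q_lmult[OF c Q_rxp[OF q1(1)]] Q_lmult[OF c Q_lxp[OF q']] Q_mult[OF q bQ]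
    by (intro Q_add) auto
  thus ?thesis using e by blast
qed

lemma Q_rep: "r \<in> Q n \<Longrightarrow> \<exists>e. (\<forall>i. e i \<in> D) \<and> (\<forall>i\<ge>n. e i = \<zero>) \<and> r = (\<Oplus>i\<in>{..<n}. e i \<otimes> x [^] i)"
proof (induct n arbitrary: r)
  case 0 thus ?case by (intro exI[of _ "\<lambda>_. \<zero>"]) simp
next
  case (Suc n)
  from Suc.prems obtain c q where h: "c \<in> D" "q \<in> Q n" "r = c \<otimes> x [^] n \<oplus> q" by (auto elim!: QE)
  from Suc.hyps[OF h(2)] obtain e where e: "\<forall>i. e i \<in> D" "\<forall>i\<ge>n. e i = \<zero>" "q = (\<Oplus>i\<in>{..<n}. e i \<otimes> x [^] i)" by auto
  let ?e = "e(n := c)"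
  have fe: "(\<lambda>i. ?e i \<otimes> x [^] i) \<in> {..<n} \<rightarrow> carrier R" using e h Dc xc by auto
  have "(\<Oplus>i\<in>{..<Suc n}. ?e i \<otimes> x [^] i) = ?e n \<otimes> x [^] n \<oplus> (\<Oplus>i\<in>{..<n}. ?e i \<otimes> x [^] i)"
    unfolding lessThan_Suc using fe h Dc xc by (subst finsum_insert) auto
  also have "(\<Oplus>i\<in>{..<n}. ?e i \<otimes> x [^] i) = (\<Oplus>i\<in>{..<n}. e i \<otimes> x [^] i)"
    using e Dc xc by (intro finsum_cong) auto
  finally have "r = (\<Oplus>i\<in>{..<Suc n}. ?e i \<otimes> x [^] i)" using h e by simp
  moreover have "\<forall>i. ?e i \<in> D" "\<forall>i\<ge>Suc n. ?e i = \<zero>" using e h by auto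
  ultimately show ?case by blast
qed

lemma Q_indep: assumes c: "c \<in> D" and q: "q \<in> Q n" and z: "c \<otimes> x [^] n \<oplus> q = \<zero>" shows "c = \<zero>"
proof -
  from Q_rep[OF q] obtain e where e: "\<forall>i. e i \<in> D" "\<forall>i\<ge>n. e i = \<zero>" "q = (\<Oplus>i\<in>{..<n}. e i \<otimes> x [^] i)" by auto
  let ?e = "e(n := c)"
  have fe: "(\<lambda>i. ?e i \<otimes> x [^] i) \<in> {..<n} \<rightarrow> carrier R" using e c Dc xc by auto
  have "(\<Oplus>i\<in>{..n}. ?e i \<otimes> x [^] i) = ?e n \<otimes> x [^] n \<oplus> (\<Oplus>i\<in>{..<n}. ?e i \<otimes> x [^] i)"
    unfolding lessThan_Suc_atMost[symmetric] lessThan_Suc using fe c Dc xc by (subst finsum_insert) auto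
  also have "(\<Oplus>i\<in>{..<n}. ?e i \<otimes> x [^] i) = (\<Oplus>i\<in>{..<n}. e i \<otimes> x [^] i)"
    using e Dc xc by (intro finsum_cong) auto
  finally have s: "\<zero> = (\<Oplus>i\<in>{..n}. ?e i \<otimes> x [^] i)" using z e by simp
  have r1: "coeff_rep R D x ?e \<zero>" unfolding coeff_rep_def
    using e c s by (auto intro!: exI[of _ n])
  have r2: "coeff_rep R D x (\<lambda>_. \<zero>) \<zero>" unfolding coeff_rep_def
    using xc by (auto intro!: exI[of _ 0])
  have "?e = (\<lambda>_. \<zero>)" using uniq r1 r2 by (metis zero_closed)
  thus ?thesis by (metis fun_upd_same)
qed

lemma Q_indep2: "c \<in> D \<Longrightarrow> c \<otimes> x [^] n \<in> Q n \<Longrightarrow> c = \<zero>"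
  using Q_indep[of c "\<ominus> (c \<otimes> x [^] n)" n] Q_neg Dc xc by (simp add: r_neg)

lemma Q_cover_aux: "(\<forall>i. e i \<in> D) \<Longrightarrow> (\<Oplus>i\<in>{..<k}. e i \<otimes> x [^] i) \<in> Q k"
proof (induct k)
  case (Suc k)
  have fe: "(\<lambda>i. e i \<otimes> x [^] i) \<in> {..<k} \<rightarrow> carrier R" using Suc Dc xc by auto
  have "(\<Oplus>i\<in>{..<Suc k}. e i \<otimes> x [^] i) = e k \<otimes> x [^] k \<oplus> (\<Oplus>i\<in>{..<k}. e i \<otimes> x [^] i)"
    unfolding lessThan_Suc using fe Suc Dc xc by (subst finsum_insert) auto
  thus ?case using Suc QI by simp
qed simp

lemma Q_cover: "r \<in> carrier R \<Longrightarrow> \<exists>n. r \<in> Q n"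
proof -
  assume r: "r \<in> carrier R"
  then obtain e where "coeff_rep R D x e r" using uniq by blast
  then obtain N where "\<forall>i. e i \<in> D" "r = (\<Oplus>i\<in>{..N}. e i \<otimes> x [^] i)" unfolding coeff_rep_def by blast
  thus ?thesis using Q_cover_aux[of e "Suc N"] unfolding lessThan_Suc_atMost by auto
qed

definition dg :: "'a \<Rightarrow> nat" where "dg r = (LEAST n. r \<in> Q (Suc n))"

lemma dg_Q: "r \<in> carrier R \<Longrightarrow> r \<in> Q (Suc (dg r))"
proof -
  assume "r \<in> carrier R"
  then obtain n where "r \<in> Q n" using Q_cover by blast
  hence "r \<in> Q (Suc n)" using Q_Suc by blast
  thus ?thesis unfolding dg_def by (rule LeastI)
qed

lemma dg_le: "r \<in> Q (Suc m) \<Longrightarrow> dg r \<le> m"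
  unfolding dg_def by (rule Least_le)

lemma dg_lt: "r \<noteq> \<zero> \<Longrightarrow> r \<in> Q k \<Longrightarrow> dg r < k"
  using dg_le by (cases k) (auto simp: less_Suc_eq_le)

lemma Q_dg: "r \<in> carrier R \<Longrightarrow> dg r < k \<Longrightarrow> r \<in> Q k"
  using dg_Q Q_mono[of "Suc (dg r)" k] by auto

lemma lead: assumes r: "r \<in> carrier R" "r \<noteq> \<zero>"
  shows "\<exists>c q. c \<in> D \<and> c \<noteq> \<zero> \<and> q \<in> Q (dg r) \<and> r = c \<otimes> x [^] (dg r) \<oplus> q"
proof -
  from dg_Q[OF r(1)] obtain c q where h: "c \<in> D" "q \<in> Q (dg r)" "r = c \<otimes> x [^] (dg r) \<oplus> q" by (auto elim!: QE)
  have "c \<noteq> \<zero>"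
  proof
    assume "c = \<zero>"
    hence "r = q" using h Qc xc by simp
    thus False using dg_lt[OF r(2)] h by auto
  qed
  thus ?thesis using h by blast
qed

lemma dg_eq: assumes c: "c \<in> D" "c \<noteq> \<zero>" and q: "q \<in> Q n" shows "dg (c \<otimes> x [^] n \<oplus> q) = n"
proof -
  let ?r = "c \<otimes> x [^] n \<oplus> q"
  have rc: "?r \<in> carrier R" using c q Dc Qc xc by simp
  have le: "dg ?r \<le> n" using dg_le QI c q by blast
  moreover have "\<not> dg ?r < n"
  proof
    assume "dg ?r < n"
    hence "?r \<in> Q n" using Q_dg rc by blast
    hence "?r \<ominus> q \<in> Q n" using Q_minus q by blast
    moreover have "?r \<ominus> q = c \<otimes> x [^] n" using c q Dc Qc xc by (simp add: minus_eq a_assoc r_neg)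
    ultimately show False using Q_indep2 c by auto
  qed
  ultimately show ?thesis by simp
qed

lemma mult_dg: assumes a: "a \<in> carrier R" "a \<noteq> \<zero>" and b: "b \<in> carrier R" "b \<noteq> \<zero>"
  shows "a \<otimes> b \<noteq> \<zero> \<and> dg (a \<otimes> b) = dg a + dg b"
proof -
  obtain c q where cq: "c \<in> D" "c \<noteq> \<zero>" "q \<in> Q (dg a)" "a = c \<otimes> x [^] (dg a) \<oplus> q" using lead a by blast
  obtain d q' where dq: "d \<in> D" "d \<noteq> \<zero>" "q' \<in> Q (dg b)" "b = d \<otimes> x [^] (dg b) \<oplus> q'" using lead b by blast
  obtain r where r: "r \<in> Q (dg a + dg b)" "a \<otimes> b = (c \<otimes> (\<sigma> ^^ dg a) d) \<otimes> x [^] (dg a + dg b) \<oplus> r"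
    using lead_mult[OF cq(1) dq(1) cq(3) dq(3)] cq dq by auto
  have e: "c \<otimes> (\<sigma> ^^ dg a) d \<in> D" "c \<otimes> (\<sigma> ^^ dg a) d \<noteq> \<zero>"
    using cq dq skD sk_nz D_nz_mult Dmult by auto
  show ?thesis using r e dg_eq[OF e r(1)] Q_indep[OF e(1) r(1)] by auto
qed

lemma dg_D: "r \<in> D \<Longrightarrow> dg r = 0"
  using dg_le[of r 0] QI0[of r 0] Dc by simp

lemma dg0_D: "r \<in> carrier R \<Longrightarrow> dg r = 0 \<Longrightarrow> r \<in> D"
  using dg_Q[of r] by (auto elim!: QE simp: Dc)

lemma minus_cancel_left: "t \<in> carrier R \<Longrightarrow> p \<in> carrier R \<Longrightarrow> r \<in> carrier R \<Longrightarrow> (t \<oplus> p) \<ominus> (t \<oplus> r) = p \<ominus> r"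
  by (simp add: minus_eq minus_add a_ac r_neg)

lemma minus_add_sw: "a \<in> carrier R \<Longrightarrow> u \<in> carrier R \<Longrightarrow> v \<in> carrier R \<Longrightarrow> a \<ominus> (u \<oplus> v) = (a \<ominus> v) \<ominus> u"
  by (simp add: minus_eq minus_add a_ac)

lemma ldiv_aux: assumes g: "g \<in> carrier R" "g \<noteq> \<zero>"
  shows "a \<in> Q k \<Longrightarrow> \<exists>q\<in>carrier R. a \<ominus> q \<otimes> g \<in> Q (dg g)"
proof (induct k arbitrary: a)
  case 0 thus ?case using g by (intro bexI[of _ \<zero>]) (auto simp: minus_eq)
next
  case (Suc k)
  let ?m = "dg g"
  from Suc.prems obtain c p where h: "c \<in> D" "p \<in> Q k" "a = c \<otimes> x [^] k \<oplus> p" by (auto elim!: QE)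
  show ?case
  proof (cases "k < ?m")
    case True
    hence "a \<in> Q ?m" using Suc.prems Q_mono[of "Suc k" ?m] by auto
    thus ?thesis using g Qc by (intro bexI[of _ \<zero>]) (auto simp: minus_eq)
  next
    case False
    obtain e p' where ep: "e \<in> D" "e \<noteq> \<zero>" "p' \<in> Q ?m" "g = e \<otimes> x [^] ?m \<oplus> p'" using lead g by blast
    define j where "j = k - ?m"
    have jk: "j + ?m = k" using False j_def by simp
    let ?s = "(\<sigma> ^^ j) e"
    have s: "?s \<in> D" "?s \<noteq> \<zero>" using skD sk_nz ep by auto
    then obtain s' where s': "s' \<in> D" "s' \<otimes> ?s = \<one>" using Dinv by blast
    define d where "d = c \<otimes> s'"
    have d: "d \<in> D" using d_def Dmult h s' by simp
    obtain r where r: "r \<in> Q (j + ?m)" "(d \<otimes> x [^] j \<oplus> \<zero>) \<otimes> (e \<otimes> x [^] ?m \<oplus> p') = (d \<otimes> ?s) \<otimes> x [^] (j + ?m) \<oplus> r"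
      using lead_mult[OF d ep(1) Q0 ep(3)] by blast
    have ds: "d \<otimes> ?s = c" unfolding d_def using h s s' Dc by (simp add: m_assoc)
    have cc: "c \<in> carrier R" "p \<in> carrier R" "r \<in> carrier R" "d \<in> carrier R" "x [^] j \<in> carrier R" "x [^] k \<in> carrier R"
      using h r d Dc Qc xc by auto
    have "(d \<otimes> x [^] j) \<otimes> g = c \<otimes> x [^] k \<oplus> r" using r ds jk ep cc by simp
    hence "a \<ominus> (d \<otimes> x [^] j) \<otimes> g = p \<ominus> r" using h cc minus_cancel_left by simp
    hence "a \<ominus> (d \<otimes> x [^] j) \<otimes> g \<in> Q k" using Q_minus h r jk by simp
    then obtain q' where q': "q' \<in> carrier R" "(a \<ominus> (d \<otimes> x [^] j) \<otimes> g) \<ominus> q' \<otimes> g \<in> Q ?m" using Suc.hyps by blast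
    have "a \<ominus> (q' \<oplus> d \<otimes> x [^] j) \<otimes> g = (a \<ominus> (d \<otimes> x [^] j) \<otimes> g) \<ominus> q' \<otimes> g"
      using q' cc g Suc.prems Qc by (simp add: l_distr minus_add_sw)
    thus ?thesis using q' cc by (intro bexI[of _ "q' \<oplus> d \<otimes> x [^] j"]) auto
  qed
qed

lemma ldiv: "g \<in> carrier R \<Longrightarrow> g \<noteq> \<zero> \<Longrightarrow> a \<in> carrier R \<Longrightarrow> \<exists>q\<in>carrier R. a \<ominus> q \<otimes> g \<in> Q (dg g)"
  using ldiv_aux Q_cover by blast

lemma rdiv_aux: assumes g: "g \<in> carrier R" "g \<noteq> \<zero>"
  shows "a \<in> Q k \<Longrightarrow> \<exists>q\<in>carrier R. a \<ominus> g \<otimes> q \<in> Q (dg g)"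
proof (induct k arbitrary: a)
  case 0 thus ?case using g by (intro bexI[of _ \<zero>]) (auto simp: minus_eq)
next
  case (Suc k)
  let ?m = "dg g"
  from Suc.prems obtain c p where h: "c \<in> D" "p \<in> Q k" "a = c \<otimes> x [^] k \<oplus> p" by (auto elim!: QE)
  show ?case
  proof (cases "k < ?m")
    case True
    hence "a \<in> Q ?m" using Suc.prems Q_mono[of "Suc k" ?m] by auto
    thus ?thesis using g Qc by (intro bexI[of _ \<zero>]) (auto simp: minus_eq)
  next
    case False
    obtain e p' where ep: "e \<in> D" "e \<noteq> \<zero>" "p' \<in> Q ?m" "g = e \<otimes> x [^] ?m \<oplus> p'" using lead g by blast
    define j where "j = k - ?m"
    have jk: "?m + j = k" using False j_def by simp
    obtain e' where e': "e' \<in> D" "e \<otimes> e' = \<one>" using Dinv ep by blast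
    obtain d where d: "d \<in> D" "(\<sigma> ^^ ?m) d = e' \<otimes> c" using sk_surj Dmult e' h by blast
    obtain r where r: "r \<in> Q (?m + j)" "(e \<otimes> x [^] ?m \<oplus> p') \<otimes> (d \<otimes> x [^] j \<oplus> \<zero>) = (e \<otimes> (\<sigma> ^^ ?m) d) \<otimes> x [^] (?m + j) \<oplus> r"
      using lead_mult[OF ep(1) d(1) ep(3) Q0] by blast
    have ds: "e \<otimes> (\<sigma> ^^ ?m) d = c" using d e' h ep Dc by (simp add: m_assoc[symmetric])
    have cc: "c \<in> carrier R" "p \<in> carrier R" "r \<in> carrier R" "d \<in> carrier R" "x [^] j \<in> carrier R" "x [^] k \<in> carrier R"
      using h r d Dc Qc xc by auto
    have "g \<otimes> (d \<otimes> x [^] j) = c \<otimes> x [^] k \<oplus> r" using r ds jk ep cc by simp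
    hence "a \<ominus> g \<otimes> (d \<otimes> x [^] j) = p \<ominus> r" using h cc minus_cancel_left by simp
    hence "a \<ominus> g \<otimes> (d \<otimes> x [^] j) \<in> Q k" using Q_minus h r jk by simp
    then obtain q' where q': "q' \<in> carrier R" "(a \<ominus> g \<otimes> (d \<otimes> x [^] j)) \<ominus> g \<otimes> q' \<in> Q ?m" using Suc.hyps by blast
    have "a \<ominus> g \<otimes> (q' \<oplus> d \<otimes> x [^] j) = (a \<ominus> g \<otimes> (d \<otimes> x [^] j)) \<ominus> g \<otimes> q'"
      using q' cc g Suc.prems Qc by (simp add: r_distr minus_add_sw)
    thus ?thesis using q' cc by (intro bexI[of _ "q' \<oplus> d \<otimes> x [^] j"]) auto
  qed
qed

lemma rdiv: "g \<in> carrier R \<Longrightarrow> g \<noteq> \<zero> \<Longrightarrow> a \<in> carrier R \<Longrightarrow> \<exists>q\<in>carrier R. a \<ominus> g \<otimes> q \<in> Q (dg g)"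
  using rdiv_aux Q_cover by blast

end


locale ore_f = ore +
  fixes f assumes fc: "f \<in> carrier R" and fnD: "f \<notin> D"
begin

lemma fnz: "f \<noteq> \<zero>" using fnD by auto
lemma fdg: "dg f > 0" using fnD dg0_D fc by auto

definition inRf :: "'a \<Rightarrow> bool" where "inRf r \<longleftrightarrow> (\<exists>t\<in>carrier R. r = t \<otimes> f)"

lemma inRf_c: "inRf r \<Longrightarrow> r \<in> carrier R" unfolding inRf_def using fc by auto
lemma inRf_0[simp]: "inRf \<zero>" unfolding inRf_def using fc by (auto intro!: bexI[of _ \<zero>])
lemma inRf_f[simp]: "inRf f" unfolding inRf_def using fc by (auto intro!: bexI[of _ \<one>])
lemma inRf_mf: "t \<in> carrier R \<Longrightarrow> inRf (t \<otimes> f)" unfolding inRf_def by auto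
lemma inRf_add: "inRf a \<Longrightarrow> inRf b \<Longrightarrow> inRf (a \<oplus> b)"
  unfolding inRf_def using fc by (auto simp: l_distr[symmetric] intro!: bexI[where x="_ \<oplus> _"])
lemma inRf_neg: "inRf a \<Longrightarrow> inRf (\<ominus> a)"
  unfolding inRf_def using fc by (auto simp: l_minus[symmetric] intro!: bexI[where x="\<ominus> _"])
lemma inRf_minus: "inRf a \<Longrightarrow> inRf b \<Longrightarrow> inRf (a \<ominus> b)"
  by (simp add: minus_eq inRf_add inRf_neg)
lemma inRf_lmult: "c \<in> carrier R \<Longrightarrow> inRf a \<Longrightarrow> inRf (c \<otimes> a)"
  unfolding inRf_def using fc by (auto simp: m_assoc[symmetric] intro!: bexI[where x="_ \<otimes> _"])

lemma inRf_dg: "inRf r \<Longrightarrow> r \<noteq> \<zero> \<Longrightarrow> dg f \<le> dg r"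
  unfolding inRf_def using mult_dg fc fnz by (metis l_null le_add2)

lemma not_inRf: "r \<in> carrier R \<Longrightarrow> r \<noteq> \<zero> \<Longrightarrow> dg r < dg f \<Longrightarrow> \<not> inRf r"
  using inRf_dg by fastforce

abbreviation L where "L r \<equiv> lcoset R f r"
abbreviation QM where "QM \<equiv> quot_mod R f"

lemma L_self: "r \<in> carrier R \<Longrightarrow> r \<in> L r"
  unfolding lcoset_def using fc by (auto intro!: exI[of _ \<zero>])

lemma L_sub: assumes "r \<in> carrier R" "r' \<in> carrier R" "inRf (r \<ominus> r')" shows "L r \<subseteq> L r'"
proof
  fix y assume "y \<in> L r"
  then obtain s where s: "s \<in> carrier R" "y = r \<oplus> s \<otimes> f" unfolding lcoset_def by auto
  obtain t where t: "t \<in> carrier R" "r \<ominus> r' = t \<otimes> f" using assms unfolding inRf_def by auto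
  have "r = r' \<oplus> t \<otimes> f" using t assms fc
    by (metis add.inv_solve_right' add.m_comm m_closed minus_eq)
  hence "y = r' \<oplus> (t \<oplus> s) \<otimes> f" using s t assms fc by (simp add: l_distr a_assoc)
  thus "y \<in> L r'" unfolding lcoset_def using s t by auto
qed

lemma inRf_swap: "r \<in> carrier R \<Longrightarrow> r' \<in> carrier R \<Longrightarrow> inRf (r \<ominus> r') \<Longrightarrow> inRf (r' \<ominus> r)"
  using inRf_neg[of "r \<ominus> r'"] by (simp add: minus_eq minus_add a_comm)

lemma L_eq: assumes "r \<in> carrier R" "r' \<in> carrier R" shows "L r = L r' \<longleftrightarrow> inRf (r \<ominus> r')"
proof
  assume "L r = L r'"
  hence "r \<in> L r'" using L_self assms by auto
  then obtain s where s: "s \<in> carrier R" "r = r' \<oplus> s \<otimes> f" unfolding lcoset_def by auto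
  hence "r \<ominus> r' = s \<otimes> f" using assms fc by (simp add: minus_eq a_ac r_neg r_neg1 r_neg2)
  thus "inRf (r \<ominus> r')" using s inRf_mf by simp
next
  assume "inRf (r \<ominus> r')"
  thus "L r = L r'" using L_sub inRf_swap assms by (metis subset_antisym)
qed

lemma L_eq0: "r \<in> carrier R \<Longrightarrow> L r = L \<zero> \<longleftrightarrow> inRf r"
  using L_eq[of r \<zero>] by (simp add: minus_eq)

lemma QM_iff: "A \<in> QM \<longleftrightarrow> (\<exists>r\<in>carrier R. A = L r)" unfolding quot_mod_def by auto
lemma L_QM[simp]: "r \<in> carrier R \<Longrightarrow> L r \<in> QM" unfolding quot_mod_def by auto

lemma L_sum: assumes "r \<in> carrier R" "s \<in> carrier R"
  shows "{u \<oplus> v | u v. u \<in> L r \<and> v \<in> L s} = L (r \<oplus> s)"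
proof (intro equalityI subsetI)
  fix y assume "y \<in> {u \<oplus> v | u v. u \<in> L r \<and> v \<in> L s}"
  then obtain s1 s2 where h: "s1 \<in> carrier R" "s2 \<in> carrier R" "y = (r \<oplus> s1 \<otimes> f) \<oplus> (s \<oplus> s2 \<otimes> f)"
    unfolding lcoset_def by auto
  hence "y = (r \<oplus> s) \<oplus> (s1 \<oplus> s2) \<otimes> f" using assms fc by (simp add: l_distr a_ac)
  thus "y \<in> L (r \<oplus> s)" unfolding lcoset_def using h by auto
next
  fix y assume "y \<in> L (r \<oplus> s)"
  then obtain t where h: "t \<in> carrier R" "y = (r \<oplus> s) \<oplus> t \<otimes> f" unfolding lcoset_def by auto
  hence "y = (r \<oplus> t \<otimes> f) \<oplus> (s \<oplus> \<zero> \<otimes> f)" using assms fc by (simp add: a_ac)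
  moreover have "r \<oplus> t \<otimes> f \<in> L r" "s \<oplus> \<zero> \<otimes> f \<in> L s" unfolding lcoset_def using h by auto
  ultimately show "y \<in> {u \<oplus> v | u v. u \<in> L r \<and> v \<in> L s}" by blast
qed

definition good :: "'a \<Rightarrow> bool" where "good u \<longleftrightarrow> u \<in> carrier R \<and> inRf (f \<otimes> u)"

definition rm :: "'a \<Rightarrow> 'a set \<Rightarrow> 'a set" where
  "rm u = restrict (\<lambda>A. L ((SOME r. r \<in> carrier R \<and> A = L r) \<otimes> u)) QM"

lemma inRf_rmult: "good u \<Longrightarrow> inRf a \<Longrightarrow> inRf (a \<otimes> u)"
proof -
  assume u: "good u" and a: "inRf a"
  then obtain t ta where "t \<in> carrier R" "a = t \<otimes> f" "ta \<in> carrier R" "f \<otimes> u = ta \<otimes> f" "u \<in> carrier R"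
    unfolding inRf_def good_def by auto
  hence "a \<otimes> u = (t \<otimes> ta) \<otimes> f" using fc by (simp add: m_assoc)
  thus ?thesis using inRf_mf \<open>t \<in> carrier R\<close> \<open>ta \<in> carrier R\<close> by simp
qed

lemma rm_L: assumes u: "good u" and r: "r \<in> carrier R" shows "rm u (L r) = L (r \<otimes> u)"
proof -
  let ?r = "SOME r'. r' \<in> carrier R \<and> L r = L r'"
  have "\<exists>r'. r' \<in> carrier R \<and> L r = L r'" using r by auto
  hence h: "?r \<in> carrier R" "L r = L ?r" by (metis (mono_tags, lifting) someI_ex)+
  have uc: "u \<in> carrier R" using u good_def by auto
  have "inRf ((?r \<ominus> r) \<otimes> u)" using h r L_eq inRf_rmult u by metis
  moreover have "(?r \<ominus> r) \<otimes> u = ?r \<otimes> u \<ominus> r \<otimes> u" using h r uc by (simp add: minus_eq l_distr l_minus)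
  ultimately have "L (?r \<otimes> u) = L (r \<otimes> u)" using L_eq h r uc by simp
  thus ?thesis unfolding rm_def using r h by simp
qed

lemma good_mult: "good u \<Longrightarrow> good v \<Longrightarrow> good (u \<otimes> v)"
  unfolding good_def using inRf_rmult[of v "f \<otimes> u"] fc by (simp add: m_assoc good_def)
lemma good_add: "good u \<Longrightarrow> good v \<Longrightarrow> good (u \<oplus> v)"
  unfolding good_def using fc by (simp add: r_distr inRf_add)
lemma good_neg: "good u \<Longrightarrow> good (\<ominus> u)"
  unfolding good_def using fc by (simp add: r_minus inRf_neg)
lemma good_0[simp]: "good \<zero>" unfolding good_def using fc by simp
lemma good_1[simp]: "good \<one>" unfolding good_def using fc by simp
lemma good_c: "good u \<Longrightarrow> u \<in> carrier R" unfolding good_def by simp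

lemma rm_ext: assumes "good u" "good v" "\<And>r. r \<in> carrier R \<Longrightarrow> L (r \<otimes> u) = L (r \<otimes> v)" shows "rm u = rm v"
proof
  fix A show "rm u A = rm v A"
  proof (cases "A \<in> QM")
    case True then obtain r where "r \<in> carrier R" "A = L r" using QM_iff by auto
    thus ?thesis using rm_L assms by simp
  next
    case False thus ?thesis unfolding rm_def by simp
  qed
qed

lemma rm_eq: assumes "good u" "good v" "inRf (u \<ominus> v)" shows "rm u = rm v"
proof (rule rm_ext[OF assms(1,2)])
  fix r assume r: "r \<in> carrier R"
  have "inRf (r \<otimes> (u \<ominus> v))" using inRf_lmult r assms by simp
  moreover have "r \<otimes> (u \<ominus> v) = r \<otimes> u \<ominus> r \<otimes> v" using r assms good_c by (simp add: minus_eq r_distr r_minus)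
  ultimately show "L (r \<otimes> u) = L (r \<otimes> v)" using L_eq r assms good_c by simp
qed

lemma rm_endo: assumes u: "good u" shows "rm u \<in> module_endos R f"
proof -
  have uc: "u \<in> carrier R" using u good_c by simp
  have "rm u \<in> QM \<rightarrow> QM"
  proof
    fix A assume "A \<in> QM" then obtain r where "r \<in> carrier R" "A = L r" using QM_iff by auto
    thus "rm u A \<in> QM" using rm_L u uc by simp
  qed
  moreover have "rm u \<in> extensional QM" unfolding rm_def by simp
  moreover have "\<forall>a\<in>carrier R. \<forall>r\<in>carrier R. \<forall>r'\<in>carrier R. \<forall>s\<in>carrier R. \<forall>s'\<in>carrier R.
         rm u (L r) = L s \<longrightarrow> rm u (L r') = L s' \<longrightarrow>
         rm u (L ((a \<otimes> r) \<oplus> r')) = L ((a \<otimes> s) \<oplus> s')"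
  proof (intro ballI impI)
    fix a r r' s s' assume c: "a \<in> carrier R" "r \<in> carrier R" "r' \<in> carrier R" "s \<in> carrier R" "s' \<in> carrier R"
      and h: "rm u (L r) = L s" "rm u (L r') = L s'"
    have i1: "inRf (r \<otimes> u \<ominus> s)" using h(1) rm_L u c L_eq uc by simp
    have i2: "inRf (r' \<otimes> u \<ominus> s')" using h(2) rm_L u c L_eq uc by simp
    have "inRf (a \<otimes> (r \<otimes> u \<ominus> s) \<oplus> (r' \<otimes> u \<ominus> s'))" using i1 i2 c inRf_lmult inRf_add by simp
    moreover have "a \<otimes> (r \<otimes> u \<ominus> s) \<oplus> (r' \<otimes> u \<ominus> s') = ((a \<otimes> r) \<oplus> r') \<otimes> u \<ominus> ((a \<otimes> s) \<oplus> s')"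
      using c uc by (simp add: minus_eq r_distr l_distr r_minus minus_add m_assoc a_ac)
    ultimately have "L (((a \<otimes> r) \<oplus> r') \<otimes> u) = L ((a \<otimes> s) \<oplus> s')" using L_eq c uc by simp
    thus "rm u (L ((a \<otimes> r) \<oplus> r')) = L ((a \<otimes> s) \<oplus> s')" using rm_L u c by simp
  qed
  ultimately show ?thesis unfolding module_endos_def by blast
qed

lemma endo_rep: assumes phi: "\<phi> \<in> module_endos R f" shows "\<exists>u. good u \<and> \<phi> = rm u"
proof -
  have ext: "\<phi> \<in> extensional QM" and pi: "\<phi> \<in> QM \<rightarrow> QM" and lin: "\<forall>a\<in>carrier R. \<forall>r\<in>carrier R. \<forall>r'\<in>carrier R. \<forall>s\<in>carrier R. \<forall>s'\<in>carrier R.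
         \<phi> (L r) = L s \<longrightarrow> \<phi> (L r') = L s' \<longrightarrow>
         \<phi> (L ((a \<otimes> r) \<oplus> r')) = L ((a \<otimes> s) \<oplus> s')" using phi unfolding module_endos_def by auto
  obtain u where u: "u \<in> carrier R" "\<phi> (L \<one>) = L u" using pi QM_iff L_QM[of \<one>] by (metis PiE one_closed)
  obtain s0 where s0: "s0 \<in> carrier R" "\<phi> (L \<zero>) = L s0" using pi QM_iff L_QM[of \<zero>] by (metis PiE zero_closed)
  have "\<phi> (L (\<one> \<otimes> \<zero> \<oplus> \<zero>)) = L (\<one> \<otimes> s0 \<oplus> s0)" using lin s0 by (meson one_closed zero_closed)
  hence "L s0 = L (s0 \<oplus> s0)" using s0 by simp
  hence "inRf (s0 \<ominus> (s0 \<oplus> s0))" using L_eq s0 by simp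
  moreover have "s0 \<ominus> (s0 \<oplus> s0) = \<ominus> s0" using s0 by (simp add: minus_eq minus_add a_assoc[symmetric] r_neg)
  ultimately have "inRf s0" using inRf_neg s0 by fastforce
  hence s00: "\<phi> (L \<zero>) = L \<zero>" using s0 L_eq0 by simp
  have phiL: "\<phi> (L r) = L (r \<otimes> u)" if r: "r \<in> carrier R" for r
  proof -
    have "\<phi> (L (r \<otimes> \<one> \<oplus> \<zero>)) = L (r \<otimes> u \<oplus> \<zero>)" using lin u s00 r by (meson one_closed zero_closed)
    thus ?thesis using r u by simp
  qed
  have "L f = L \<zero>" using L_eq0 fc by simp
  hence "L (f \<otimes> u) = L \<zero>" using phiL s00 fc by metis
  hence g: "good u" using L_eq0 fc u unfolding good_def by simp
  have "\<phi> = rm u"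
  proof
    fix A show "\<phi> A = rm u A"
    proof (cases "A \<in> QM")
      case True then obtain r where "r \<in> carrier R" "A = L r" using QM_iff by auto
      thus ?thesis using rm_L g phiL by simp
    next
      case False thus ?thesis using ext unfolding rm_def by (simp add: extensional_def)
    qed
  qed
  thus ?thesis using g by blast
qed

abbreviation E where "E \<equiv> End_ring R f"

lemma E_carrier: "carrier E = module_endos R f" by (simp add: End_ring_def)

lemma E_mult: assumes "good u" "good v" shows "rm u \<otimes>\<^bsub>E\<^esub> rm v = rm (v \<otimes> u)"
proof -
  have "restrict (rm u \<circ> rm v) QM = rm (v \<otimes> u)"
  proof
    fix A show "restrict (rm u \<circ> rm v) QM A = rm (v \<otimes> u) A"
    proof (cases "A \<in> QM")
      case True then obtain r where "r \<in> carrier R" "A = L r" using QM_iff by auto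
      thus ?thesis using rm_L assms good_mult good_c by (simp add: m_assoc)
    next
      case False thus ?thesis unfolding rm_def by simp
    qed
  qed
  thus ?thesis by (simp add: End_ring_def)
qed

lemma E_add: assumes "good u" "good v" shows "rm u \<oplus>\<^bsub>E\<^esub> rm v = rm (u \<oplus> v)"
proof -
  have "restrict (\<lambda>A. {a \<oplus> b | a b. a \<in> rm u A \<and> b \<in> rm v A}) QM = rm (u \<oplus> v)"
  proof
    fix A show "restrict (\<lambda>A. {a \<oplus> b | a b. a \<in> rm u A \<and> b \<in> rm v A}) QM A = rm (u \<oplus> v) A"
    proof (cases "A \<in> QM")
      case True then obtain r where r: "r \<in> carrier R" "A = L r" using QM_iff by auto
      thus ?thesis using rm_L assms good_add good_c L_sum[of "r \<otimes> u" "r \<otimes> v"] by (simp add: r_distr)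
    next
      case False thus ?thesis unfolding rm_def by simp
    qed
  qed
  thus ?thesis by (simp add: End_ring_def)
qed

lemma E_one: "\<one>\<^bsub>E\<^esub> = rm \<one>"
proof -
  have "restrict (\<lambda>A. A) QM = rm \<one>"
  proof
    fix A show "restrict (\<lambda>A. A) QM A = rm \<one> A"
    proof (cases "A \<in> QM")
      case True then obtain r where r: "r \<in> carrier R" "A = L r" using QM_iff by auto
      thus ?thesis using rm_L by simp
    next
      case False thus ?thesis unfolding rm_def by simp
    qed
  qed
  thus ?thesis by (simp add: End_ring_def)
qed

lemma E_zero: "\<zero>\<^bsub>E\<^esub> = rm \<zero>"
proof -
  have "restrict (\<lambda>A. L \<zero>) QM = rm \<zero>"
  proof
    fix A show "restrict (\<lambda>A. L \<zero>) QM A = rm \<zero> A"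
    proof (cases "A \<in> QM")
      case True then obtain r where r: "r \<in> carrier R" "A = L r" using QM_iff by auto
      thus ?thesis using rm_L by simp
    next
      case False thus ?thesis unfolding rm_def by simp
    qed
  qed
  thus ?thesis by (simp add: End_ring_def)
qed

lemma E_elim: "\<phi> \<in> carrier E \<Longrightarrow> (\<And>u. good u \<Longrightarrow> \<phi> = rm u \<Longrightarrow> P) \<Longrightarrow> P"
  using endo_rep E_carrier by auto

lemma rm_in: "good u \<Longrightarrow> rm u \<in> carrier E" using rm_endo E_carrier by simp

lemma E_ring: "ring E"
proof (rule ringI)
  show "abelian_group E"
  proof (rule abelian_groupI)
    fix a b assume "a \<in> carrier E" "b \<in> carrier E"
    thus "a \<oplus>\<^bsub>E\<^esub> b \<in> carrier E" by (auto elim!: E_elim simp: E_add good_add rm_in)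
  next
    show "\<zero>\<^bsub>E\<^esub> \<in> carrier E" by (simp add: E_zero rm_in)
  next
    fix a b c assume "a \<in> carrier E" "b \<in> carrier E" "c \<in> carrier E"
    thus "a \<oplus>\<^bsub>E\<^esub> b \<oplus>\<^bsub>E\<^esub> c = a \<oplus>\<^bsub>E\<^esub> (b \<oplus>\<^bsub>E\<^esub> c)"
      by (auto elim!: E_elim simp: E_add good_add good_c a_assoc)
  next
    fix a b assume "a \<in> carrier E" "b \<in> carrier E"
    thus "a \<oplus>\<^bsub>E\<^esub> b = b \<oplus>\<^bsub>E\<^esub> a"
      by (auto elim!: E_elim simp: E_add good_add good_c a_comm)
  next
    fix a assume "a \<in> carrier E"
    thus "\<zero>\<^bsub>E\<^esub> \<oplus>\<^bsub>E\<^esub> a = a"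
      by (auto elim!: E_elim simp: E_add E_zero good_c)
  next
    fix a assume "a \<in> carrier E"
    thus "\<exists>y\<in>carrier E. y \<oplus>\<^bsub>E\<^esub> a = \<zero>\<^bsub>E\<^esub>"
    proof (elim E_elim)
      fix u assume u: "good u" "a = rm u"
      have "rm (\<ominus> u) \<oplus>\<^bsub>E\<^esub> a = \<zero>\<^bsub>E\<^esub>" using u good_neg good_c by (simp add: E_add E_zero l_neg)
      thus ?thesis using rm_in good_neg u by blast
    qed
  qed
next
  show "monoid E"
  proof (rule monoidI)
    fix a b assume "a \<in> carrier E" "b \<in> carrier E"
    thus "a \<otimes>\<^bsub>E\<^esub> b \<in> carrier E" by (auto elim!: E_elim simp: E_mult good_mult rm_in)
  next
    show "\<one>\<^bsub>E\<^esub> \<in> carrier E" by (simp add: E_one rm_in)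
  next
    fix a b c assume "a \<in> carrier E" "b \<in> carrier E" "c \<in> carrier E"
    thus "a \<otimes>\<^bsub>E\<^esub> b \<otimes>\<^bsub>E\<^esub> c = a \<otimes>\<^bsub>E\<^esub> (b \<otimes>\<^bsub>E\<^esub> c)"
      by (auto elim!: E_elim simp: E_mult good_mult good_c m_assoc)
  next
    fix a assume "a \<in> carrier E"
    thus "\<one>\<^bsub>E\<^esub> \<otimes>\<^bsub>E\<^esub> a = a" by (auto elim!: E_elim simp: E_mult E_one good_c)
  next
    fix a assume "a \<in> carrier E"
    thus "a \<otimes>\<^bsub>E\<^esub> \<one>\<^bsub>E\<^esub> = a" by (auto elim!: E_elim simp: E_mult E_one good_c)
  qed
next
  fix a b c assume "a \<in> carrier E" "b \<in> carrier E" "c \<in> carrier E"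
  thus "(a \<oplus>\<^bsub>E\<^esub> b) \<otimes>\<^bsub>E\<^esub> c = a \<otimes>\<^bsub>E\<^esub> c \<oplus>\<^bsub>E\<^esub> b \<otimes>\<^bsub>E\<^esub> c"
    by (auto elim!: E_elim simp: E_mult E_add good_mult good_add good_c r_distr)
next
  fix a b c assume "a \<in> carrier E" "b \<in> carrier E" "c \<in> carrier E"
  thus "c \<otimes>\<^bsub>E\<^esub> (a \<oplus>\<^bsub>E\<^esub> b) = c \<otimes>\<^bsub>E\<^esub> a \<oplus>\<^bsub>E\<^esub> c \<otimes>\<^bsub>E\<^esub> b"
    by (auto elim!: E_elim simp: E_mult E_add good_mult good_add good_c l_distr)
qed

end


context ore_f begin

lemma eq_of_minus0: "a \<in> carrier R \<Longrightarrow> b \<in> carrier R \<Longrightarrow> a \<ominus> b = \<zero> \<Longrightarrow> a = b"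
  by (metis add.inv_solve_right' l_zero minus_eq zero_closed)

lemma id1: "f \<in> carrier R \<Longrightarrow> p \<in> carrier R \<Longrightarrow> u \<in> carrier R \<Longrightarrow>
  (f \<otimes> p) \<otimes> u = f \<ominus> f \<otimes> (\<one> \<ominus> p \<otimes> u)"
proof -
  assume c: "f \<in> carrier R" "p \<in> carrier R" "u \<in> carrier R"
  have "f \<otimes> (\<one> \<ominus> p \<otimes> u) = f \<ominus> f \<otimes> (p \<otimes> u)" using c by (simp add: minus_eq r_distr r_minus)
  hence "f \<ominus> f \<otimes> (\<one> \<ominus> p \<otimes> u) = f \<ominus> (f \<ominus> f \<otimes> (p \<otimes> u))" by simp
  also have "\<dots> = f \<otimes> (p \<otimes> u)" using c by (simp add: minus_eq minus_add minus_minus r_neg2)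
  finally show ?thesis using c by (simp add: m_assoc)
qed

lemma id2: "p \<in> carrier R \<Longrightarrow> u \<in> carrier R \<Longrightarrow>
  (u \<otimes> p \<ominus> \<one>) \<otimes> u = \<ominus> (u \<otimes> (\<one> \<ominus> p \<otimes> u))"
proof -
  assume c: "p \<in> carrier R" "u \<in> carrier R"
  have "(u \<otimes> p \<ominus> \<one>) \<otimes> u = u \<otimes> (p \<otimes> u) \<ominus> u" using c by (simp add: minus_eq l_distr l_minus m_assoc)
  moreover have "u \<otimes> (\<one> \<ominus> p \<otimes> u) = u \<ominus> u \<otimes> (p \<otimes> u)" using c by (simp add: minus_eq r_distr r_minus)
  moreover have "\<ominus> (u \<ominus> u \<otimes> (p \<otimes> u)) = u \<otimes> (p \<otimes> u) \<ominus> u" using c by (simp add: minus_eq minus_add minus_minus a_comm)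
  ultimately show ?thesis by simp
qed

lemma id3: "p \<in> carrier R \<Longrightarrow> u \<in> carrier R \<Longrightarrow> p \<otimes> u \<ominus> \<one> = \<ominus> (\<one> \<ominus> p \<otimes> u)"
  by (simp add: minus_eq minus_add minus_minus a_comm)

lemma principal:
  assumes S: "S \<subseteq> carrier R" "f \<in> S" "\<And>a b. a \<in> S \<Longrightarrow> b \<in> S \<Longrightarrow> a \<ominus> b \<in> S"
    "\<And>c a. c \<in> carrier R \<Longrightarrow> a \<in> S \<Longrightarrow> c \<otimes> a \<in> S"
  shows "\<exists>k\<in>S. k \<noteq> \<zero> \<and> (\<forall>r\<in>S. \<exists>q\<in>carrier R. r = q \<otimes> k)"
proof -
  let ?P = "\<lambda>n. \<exists>k\<in>S. k \<noteq> \<zero> \<and> dg k = n"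
  have "?P (dg f)" by (rule bexI[of _ f]) (use S(2) fnz in auto)
  hence "?P (LEAST n. ?P n)" by (rule LeastI[where P="?P"])
  then obtain k where k: "k \<in> S" "k \<noteq> \<zero>" "dg k = (LEAST n. ?P n)" by blast
  have min: "dg k \<le> dg h" if "h \<in> S" "h \<noteq> \<zero>" for h
    unfolding k(3) by (rule Least_le) (use that in blast)
  have "\<forall>r\<in>S. \<exists>q\<in>carrier R. r = q \<otimes> k"
  proof
    fix r assume r: "r \<in> S"
    have kc: "k \<in> carrier R" "r \<in> carrier R" using k r S(1) by auto
    obtain q where q: "q \<in> carrier R" "r \<ominus> q \<otimes> k \<in> Q (dg k)" using ldiv kc k by blast
    have inS: "r \<ominus> q \<otimes> k \<in> S" using S(3)[OF r S(4)[OF q(1) k(1)]] .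
    have "r \<ominus> q \<otimes> k = \<zero>"
    proof (rule ccontr)
      assume "r \<ominus> q \<otimes> k \<noteq> \<zero>"
      hence "dg (r \<ominus> q \<otimes> k) < dg k" using dg_lt q by blast
      thus False using min[OF inS \<open>r \<ominus> q \<otimes> k \<noteq> \<zero>\<close>] by simp
    qed
    hence "r = q \<otimes> k" using eq_of_minus0[of r "q \<otimes> k"] q kc by simp
    thus "\<exists>q\<in>carrier R. r = q \<otimes> k" using q by blast
  qed
  thus ?thesis using k(1,2) by blast
qed

definition irr where "irr \<longleftrightarrow> (\<forall>a\<in>carrier R. \<forall>b\<in>carrier R. f = a \<otimes> b \<longrightarrow> a \<in> D \<or> b \<in> D)"

lemma left_inv_D: "k \<in> D \<Longrightarrow> k \<noteq> \<zero> \<Longrightarrow> \<exists>k'\<in>D. k' \<otimes> k = \<one>" using Dinv by blast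

lemma fwd: assumes irr shows "skew_field E"
proof -
  have one_ne: "\<one>\<^bsub>E\<^esub> \<noteq> \<zero>\<^bsub>E\<^esub>"
  proof
    assume "\<one>\<^bsub>E\<^esub> = \<zero>\<^bsub>E\<^esub>"
    hence "rm \<one> (L \<one>) = rm \<zero> (L \<one>)" by (simp add: E_one E_zero)
    hence "L \<one> = L \<zero>" using rm_L by simp
    hence "inRf \<one>" using L_eq0 by simp
    hence "dg f \<le> dg \<one>" using inRf_dg one_neq_zero by blast
    thus False using dg_D[OF D1] fdg by simp
  qed
  have units: "\<phi> \<in> Units E" if phi: "\<phi> \<in> carrier E" "\<phi> \<noteq> \<zero>\<^bsub>E\<^esub>" for \<phi>
  proof -
    obtain u where u: "good u" "\<phi> = rm u" using phi E_elim by metis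
    have uc: "u \<in> carrier R" using u good_c by simp
    have nu: "\<not> inRf u"
    proof
      assume "inRf u"
      hence "rm u = rm \<zero>" using rm_eq u uc by (simp add: minus_eq)
      thus False using phi u E_zero by simp
    qed
    \<comment> \<open>injectivity\<close>
    let ?S1 = "{r \<in> carrier R. inRf (r \<otimes> u)}"
    have "\<exists>k\<in>?S1. k \<noteq> \<zero> \<and> (\<forall>r\<in>?S1. \<exists>q\<in>carrier R. r = q \<otimes> k)"
    proof (rule principal)
      show "f \<in> ?S1" using u fc good_def by simp
    next
      fix a b assume "a \<in> ?S1" "b \<in> ?S1"
      thus "a \<ominus> b \<in> ?S1" using uc inRf_minus by (simp add: minus_eq l_distr l_minus)
    next
      fix c a assume "c \<in> carrier R" "a \<in> ?S1"
      thus "c \<otimes> a \<in> ?S1" using uc inRf_lmult by (simp add: m_assoc)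
    qed auto
    then obtain k where k: "k \<in> carrier R" "inRf (k \<otimes> u)" "k \<noteq> \<zero>" "\<And>r. r \<in> ?S1 \<Longrightarrow> \<exists>q\<in>carrier R. r = q \<otimes> k"
      by blast
    obtain t where t: "t \<in> carrier R" "f = t \<otimes> k" using k(4)[of f] u fc good_def by auto
    have "k \<notin> D"
    proof
      assume "k \<in> D"
      then obtain k' where "k' \<in> D" "k' \<otimes> k = \<one>" using left_inv_D k(3) by blast
      hence "inRf (k' \<otimes> (k \<otimes> u))" using k inRf_lmult[of k' "k \<otimes> u"] Dc uc by simp
      hence "inRf ((k' \<otimes> k) \<otimes> u)" using k(1) \<open>k' \<in> D\<close> Dc uc by (simp add: m_assoc)
      thus False using nu \<open>k' \<otimes> k = \<one>\<close> uc by simp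
    qed
    hence "t \<in> D" using assms t(1,2) k(1) unfolding irr_def by blast
    moreover have "t \<noteq> \<zero>" using t fnz k(1) by auto
    ultimately obtain t' where t': "t' \<in> D" "t' \<otimes> t = \<one>" using left_inv_D by blast
    have kf: "k = t' \<otimes> f" using t t' k(1) Dc by (simp add: m_assoc[symmetric])
    have S1: "inRf r" if "r \<in> carrier R" "inRf (r \<otimes> u)" for r
    proof -
      have "r \<in> ?S1" using that by simp
      then obtain q where q: "q \<in> carrier R" "r = q \<otimes> k" using k(4) by blast
      have tc: "t' \<in> carrier R" using t' Dc by simp
      have "r = (q \<otimes> t') \<otimes> f" using q kf tc fc by (simp add: m_assoc)
      thus ?thesis using inRf_mf q tc by simp
    qed
    \<comment> \<open>surjectivity\<close>
    let ?S2 = "{r \<in> carrier R. \<exists>p\<in>carrier R. inRf (r \<ominus> p \<otimes> u)}"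
    have "\<exists>k\<in>?S2. k \<noteq> \<zero> \<and> (\<forall>r\<in>?S2. \<exists>q\<in>carrier R. r = q \<otimes> k)"
    proof (rule principal)
      show "f \<in> ?S2" using uc fc by (auto intro!: bexI[of _ \<zero>] simp: minus_eq)
    next
      fix a b assume a: "a \<in> ?S2" and b: "b \<in> ?S2"
      then obtain p1 p2 where p: "p1 \<in> carrier R" "inRf (a \<ominus> p1 \<otimes> u)" "p2 \<in> carrier R" "inRf (b \<ominus> p2 \<otimes> u)" by auto
      have "(a \<ominus> b) \<ominus> (p1 \<ominus> p2) \<otimes> u = (a \<ominus> p1 \<otimes> u) \<ominus> (b \<ominus> p2 \<otimes> u)"
        using a b p uc by (simp add: minus_eq l_distr l_minus minus_add a_ac)
      thus "a \<ominus> b \<in> ?S2" using a b p inRf_minus by (auto intro!: bexI[of _ "p1 \<ominus> p2"])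
    next
      fix c a assume c: "c \<in> carrier R" and a: "a \<in> ?S2"
      then obtain p where p: "p \<in> carrier R" "inRf (a \<ominus> p \<otimes> u)" by auto
      have "c \<otimes> a \<ominus> (c \<otimes> p) \<otimes> u = c \<otimes> (a \<ominus> p \<otimes> u)"
        using a c p uc by (simp add: minus_eq r_distr r_minus m_assoc)
      thus "c \<otimes> a \<in> ?S2" using a c p inRf_lmult by (auto intro!: bexI[of _ "c \<otimes> p"])
    qed auto
    then obtain k2 where k2: "k2 \<in> carrier R" "k2 \<noteq> \<zero>" "\<exists>p\<in>carrier R. inRf (k2 \<ominus> p \<otimes> u)"
      "\<And>r. r \<in> ?S2 \<Longrightarrow> \<exists>q\<in>carrier R. r = q \<otimes> k2"
      by blast
    have fS2: "f \<in> ?S2" using uc fc by (auto intro!: bexI[of _ \<zero>] simp: minus_eq)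
    obtain t2 where t2: "t2 \<in> carrier R" "f = t2 \<otimes> k2" using k2(4)[OF fS2] by blast
    have "t2 \<notin> D"
    proof
      assume "t2 \<in> D"
      moreover have "t2 \<noteq> \<zero>" using t2 fnz k2(1) by auto
      ultimately obtain t2' where t2': "t2' \<in> D" "t2' \<otimes> t2 = \<one>" using left_inv_D by blast
      have kf: "k2 = t2' \<otimes> f" using t2 t2' k2(1) Dc by (simp add: m_assoc[symmetric])
      have "u \<in> ?S2" using uc by (auto intro!: bexI[of _ \<one>] simp: minus_eq r_neg)
      then obtain q where "q \<in> carrier R" "u = q \<otimes> k2" using k2(4) by blast
      hence "inRf u" using kf t2' Dc fc inRf_lmult[of "q \<otimes> t2'" f] by (simp add: m_assoc)
      thus False using nu by simp
    qed
    hence "k2 \<in> D" using assms t2 k2(1) unfolding irr_def by blast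
    then obtain k2' where k2': "k2' \<in> D" "k2' \<otimes> k2 = \<one>" using left_inv_D k2(2) by blast
    obtain p0 where p0: "p0 \<in> carrier R" "inRf (k2 \<ominus> p0 \<otimes> u)" using k2(3) by blast
    define p where "p = k2' \<otimes> p0"
    have pc: "p \<in> carrier R" using p_def k2' p0 Dc by simp
    have "k2' \<otimes> (k2 \<ominus> p0 \<otimes> u) = \<one> \<ominus> p \<otimes> u"
      using k2' k2 p0 Dc uc by (simp add: p_def minus_eq r_distr r_minus m_assoc[symmetric])
    hence ip: "inRf (\<one> \<ominus> p \<otimes> u)" using inRf_lmult[of k2' "k2 \<ominus> p0 \<otimes> u"] k2' Dc p0 by simp
    have "(f \<otimes> p) \<otimes> u = f \<ominus> f \<otimes> (\<one> \<ominus> p \<otimes> u)"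
      using fc pc uc by (rule id1)
    hence "inRf ((f \<otimes> p) \<otimes> u)" using ip inRf_minus inRf_lmult fc by simp
    hence gp: "good p" using S1 fc pc good_def by simp
    have "(u \<otimes> p \<ominus> \<one>) \<otimes> u = \<ominus> (u \<otimes> (\<one> \<ominus> p \<otimes> u))"
      using pc uc by (rule id2)
    hence "inRf ((u \<otimes> p \<ominus> \<one>) \<otimes> u)" using ip inRf_neg inRf_lmult uc by simp
    hence i1: "inRf (u \<otimes> p \<ominus> \<one>)" using S1 pc uc by simp
    have "p \<otimes> u \<ominus> \<one> = \<ominus> (\<one> \<ominus> p \<otimes> u)" using pc uc by (rule id3)
    hence i2: "inRf (p \<otimes> u \<ominus> \<one>)" using ip inRf_neg by simp
    have "rm p \<otimes>\<^bsub>E\<^esub> \<phi> = \<one>\<^bsub>E\<^esub>" using u gp E_mult E_one rm_eq[of "u \<otimes> p" \<one>] i1 good_mult by simp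
    moreover have "\<phi> \<otimes>\<^bsub>E\<^esub> rm p = \<one>\<^bsub>E\<^esub>" using u gp E_mult E_one rm_eq[of "p \<otimes> u" \<one>] i2 good_mult by simp
    ultimately show ?thesis using phi rm_in gp unfolding Units_def by blast
  qed
  show ?thesis unfolding skew_field_def using E_ring one_ne units by blast
qed

end


context ore_f begin

lemma ann_iff: "r \<in> annihilator R f \<longleftrightarrow> r \<in> carrier R \<and> (\<forall>s\<in>carrier R. inRf (r \<otimes> s))"
  unfolding annihilator_def inRf_def by auto

lemma bwd: assumes bnd: "bounded R f" and sk: "skew_field E" shows irr
proof (rule ccontr)
  assume "\<not> irr"
  then obtain a b where ab: "a \<in> carrier R" "b \<in> carrier R" "f = a \<otimes> b" "a \<notin> D" "b \<notin> D"
    unfolding irr_def by blast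
  have anz: "a \<noteq> \<zero>" and bnz: "b \<noteq> \<zero>" using ab D0 by auto
  have dga: "dg a > 0" using ab dg0_D by (metis gr0I)
  have dgb: "dg b > 0" using ab dg0_D by (metis gr0I)
  have fab: "dg f = dg a + dg b" using mult_dg ab anz bnz by simp
  let ?I = "annihilator R f"
  have I0: "\<zero> \<in> ?I" unfolding ann_iff by simp
  obtain g0 where g0: "g0 \<in> ?I" "g0 \<noteq> \<zero>" using bnd I0 unfolding bounded_def by blast
  let ?P = "\<lambda>n. \<exists>g\<in>?I. g \<noteq> \<zero> \<and> dg g = n"
  have "?P (dg g0)" by (rule bexI[of _ g0]) (use g0 in auto)
  hence "?P (LEAST n. ?P n)" by (rule LeastI[where P="?P"])
  then obtain g where g: "g \<in> ?I" "g \<noteq> \<zero>" "dg g = (LEAST n. ?P n)" by blast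
  have min: "dg g \<le> dg h" if "h \<in> ?I" "h \<noteq> \<zero>" for h
    unfolding g(3) by (rule Least_le) (use that in blast)
  have gc: "g \<in> carrier R" using g(1) ann_iff by blast
  have I_r: "y \<otimes> q \<in> ?I" if "y \<in> ?I" "q \<in> carrier R" for y q
  proof -
    have yc: "y \<in> carrier R" using that ann_iff by blast
    have "inRf (y \<otimes> (q \<otimes> s))" if "s \<in> carrier R" for s using \<open>y \<in> ?I\<close> ann_iff that \<open>q \<in> carrier R\<close> by simp
    thus ?thesis using yc that ann_iff by (simp add: m_assoc)
  qed
  have I_l: "c \<otimes> y \<in> ?I" if "y \<in> ?I" "c \<in> carrier R" for y c
  proof -
    have yc: "y \<in> carrier R" using that ann_iff by blast
    have "inRf (c \<otimes> (y \<otimes> s))" if "s \<in> carrier R" for s using \<open>y \<in> ?I\<close> ann_iff that \<open>c \<in> carrier R\<close> inRf_lmult by simp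
    thus ?thesis using yc that ann_iff by (simp add: m_assoc)
  qed
  have I_m: "y \<ominus> z \<in> ?I" if "y \<in> ?I" "z \<in> ?I" for y z
  proof -
    have yc: "y \<in> carrier R" "z \<in> carrier R" using that ann_iff by blast+
    have "inRf ((y \<ominus> z) \<otimes> s)" if "s \<in> carrier R" for s
    proof -
      have "(y \<ominus> z) \<otimes> s = y \<otimes> s \<ominus> z \<otimes> s" using yc that by (simp add: minus_eq l_distr l_minus)
      thus ?thesis using \<open>y \<in> ?I\<close> \<open>z \<in> ?I\<close> ann_iff that inRf_minus by simp
    qed
    thus ?thesis using yc ann_iff by simp
  qed
  have "inRf (g \<otimes> \<one>)" using g(1) one_closed unfolding ann_iff by blast
  hence "inRf g" using gc by simp
  then obtain t where t: "t \<in> carrier R" "g = t \<otimes> f" using gc unfolding inRf_def by auto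
  define c where "c = t \<otimes> a"
  have cc: "c \<in> carrier R" using c_def t ab by simp
  have gcb: "g = c \<otimes> b" using t ab c_def by (simp add: m_assoc)
  have cnz: "c \<noteq> \<zero>" using gcb g(2) ab by auto
  obtain q where q: "q \<in> carrier R" "c \<otimes> g \<ominus> g \<otimes> q \<in> Q (dg g)" using rdiv[OF gc g(2), of "c \<otimes> g"] cc gc by auto
  have inI: "c \<otimes> g \<ominus> g \<otimes> q \<in> ?I" using I_m[OF I_l[OF g(1) cc] I_r[OF g(1) q(1)]] .
  have "c \<otimes> g \<ominus> g \<otimes> q = \<zero>"
  proof (rule ccontr)
    assume nz: "c \<otimes> g \<ominus> g \<otimes> q \<noteq> \<zero>"
    hence "dg (c \<otimes> g \<ominus> g \<otimes> q) < dg g" using dg_lt q by blast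
    thus False using min[OF inI nz] by simp
  qed
  hence cg: "c \<otimes> g = g \<otimes> q" using eq_of_minus0[of "c \<otimes> g" "g \<otimes> q"] cc gc q by simp
  have "c \<otimes> (g \<ominus> b \<otimes> q) = c \<otimes> g \<ominus> c \<otimes> (b \<otimes> q)" using cc gc ab(2) q by (simp add: minus_eq r_distr r_minus)
  also have "c \<otimes> (b \<otimes> q) = g \<otimes> q" using gcb cc ab(2) q by (simp add: m_assoc)
  finally have "c \<otimes> (g \<ominus> b \<otimes> q) = \<zero>" using cg gc q by (simp add: minus_eq r_neg)
  hence "g \<ominus> b \<otimes> q = \<zero>" using mult_dg[OF cc cnz, of "g \<ominus> b \<otimes> q"] gc ab(2) q by auto
  hence gbq: "g = b \<otimes> q" using eq_of_minus0[of g "b \<otimes> q"] gc ab(2) q by simp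
  have qnz: "q \<noteq> \<zero>" using gbq g(2) ab(2) by auto
  have "dg g = dg b + dg q" using gbq mult_dg ab(2) q bnz qnz by simp
  hence "dg q < dg g" using dgb by simp
  hence "q \<notin> ?I" using min[of q] qnz by (meson not_le)
  then obtain s where s: "s \<in> carrier R" "\<not> inRf (q \<otimes> s)" using ann_iff q by blast
  define v where "v = q \<otimes> s"
  have vc: "v \<in> carrier R" using v_def q s by simp
  have bv: "inRf (b \<otimes> v)" using g(1) ann_iff s gbq ab(2) q by (simp add: v_def m_assoc)
  have "inRf (f \<otimes> v)" using inRf_lmult[OF ab(1) bv] ab(1,2,3) vc by (simp add: m_assoc)
  hence gv: "good v" using vc good_def by simp
  have "rm v \<noteq> \<zero>\<^bsub>E\<^esub>"
  proof
    assume "rm v = \<zero>\<^bsub>E\<^esub>"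
    hence "rm v (L \<one>) = rm \<zero> (L \<one>)" by (simp add: E_zero)
    hence "L v = L \<zero>" using rm_L gv vc by simp
    thus False using L_eq0 vc s v_def by simp
  qed
  hence "rm v \<in> Units E" using sk rm_in gv unfolding skew_field_def by blast
  then obtain \<psi> where psi: "\<psi> \<in> carrier E" "\<psi> \<otimes>\<^bsub>E\<^esub> rm v = \<one>\<^bsub>E\<^esub>" unfolding Units_def by blast
  obtain w where w: "good w" "\<psi> = rm w" using psi E_elim by metis
  have wc: "w \<in> carrier R" using w good_c by simp
  have "rm (v \<otimes> w) = rm \<one>" using psi w E_mult gv E_one by simp
  hence "rm (v \<otimes> w) (L b) = rm \<one> (L b)" by simp
  hence "L (b \<otimes> (v \<otimes> w)) = L b" using rm_L good_mult gv w ab(2) by simp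
  moreover have "inRf (b \<otimes> (v \<otimes> w))" using inRf_rmult[OF w(1) bv] ab(2) vc wc by (simp add: m_assoc)
  ultimately have "inRf b" using L_eq0 ab(2) vc wc by (metis m_closed)
  hence "dg f \<le> dg b" using inRf_dg bnz by blast
  thus False using fab dga by simp
qed

lemma main: "bounded R f \<Longrightarrow> irr \<longleftrightarrow> skew_field E" using fwd bwd by blast

end

theorem mainTheorem7:
  fixes R :: "('a, 'b) ring_scheme" and D :: "'a set" and \<sigma> \<delta> :: "'a \<Rightarrow> 'a" and x f :: 'a
  assumes "is_ore_extension R D \<sigma> \<delta> x"
    and "is_automorphism R D \<sigma>"
    and "is_sigma_derivation R D \<sigma> \<delta>"
    and "f \<in> carrier R"
    and "ore_degree R D x f > 0"
    and "bounded R f"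
  shows "ore_irreducible R D f \<longleftrightarrow> skew_field (End_ring R f)"
proof -
  have rR: "ring R" and o: "skew_subfield R D" "x \<in> carrier R" "\<forall>r\<in>carrier R. \<exists>!c. coeff_rep R D x c r"
    "\<forall>a\<in>D. x \<otimes>\<^bsub>R\<^esub> a = (\<sigma> a \<otimes>\<^bsub>R\<^esub> x) \<oplus>\<^bsub>R\<^esub> \<delta> a"
    using assms(1) unfolding is_ore_extension_def by auto
  interpret ore R D \<sigma> \<delta> x
    by (intro ore.intro ore_axioms.intro rR o assms(2,3))
  have fnz: "f \<noteq> \<zero>\<^bsub>R\<^esub>" using assms(5) unfolding ore_degree_def by auto
  have fnD: "f \<notin> D"
  proof
    assume fD: "f \<in> D"
    define c0 where "c0 = (\<lambda>n::nat. if n = 0 then f else \<zero>\<^bsub>R\<^esub>)"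
    have "coeff_rep R D x c0 f" unfolding coeff_rep_def c0_def
      using fD Dc xc by (auto intro!: exI[of _ 0])
    hence "ore_coeff R D x f = c0" unfolding ore_coeff_def using o(3) assms(4) by (metis the1_equality)
    hence "ore_degree R D x f = (GREATEST n. c0 n \<noteq> \<zero>\<^bsub>R\<^esub>)" unfolding ore_degree_def using fnz by simp
    also have "\<dots> = 0" by (rule Greatest_equality) (auto simp: c0_def fnz split: if_splits)
    finally show False using assms(5) by simp
  qed
  interpret ore_f R D \<sigma> \<delta> x f
    by (intro ore_f.intro ore_f_axioms.intro ore_axioms assms(4) fnD)
  have "ore_irreducible R D f = irr" unfolding ore_irreducible_def irr_def by simp
  thus ?thesis using main assms(6) by simp
qed


end
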